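(* Let $G=\{\cdot\mid *\}$ and let $\mathcal{U}=\mathcal{D}(G)$. Then $G\equiv_\mathcal{U}0$.
   Context: Games are finite partizan games; $\{\cdot\mid *\}$ is the game with no Left option and sole Right option $*=\{0\mid0\}$. $o(G)$ is the misère outcome class (ordered $\mathscr{L}>\mathscr{N}>\mathscr{R}$, $\mathscr{L}>\mathscr{P}>\mathscr{R}$). A universe is a set of games closed under options, disjunctive sums, conjugates, and forming $\{\mathscr{G}^L\mid\mathscr{G}^R\}$ from nonempty finite subsets of it; $\mathcal{D}(\mathcal{A})$ is the smallest universe containing $\mathcal{A}$. $G\equiv_\mathcal{U}H$ means $o(G+X)=o(H+X)$ for all $X\in\mathcal{U}$. *)

theory Defs
  imports "HOL-Library.FSet"
begin

datatype game = Game (lopts: "game fset") (ropts: "game fset")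

definition zero_game :: game where "zero_game = Game {||} {||}"
definition star_game :: game where "star_game = Game {|zero_game|} {|zero_game|}"

lemma size_lopt: "z |\<in>| A \<Longrightarrow> size z < size (Game A B)"
proof -
  assume z: "z |\<in>| A"
  have "size z < Suc (size z)" by simp
  also have "Suc (size z) \<le> (\<Sum>x\<in>fset A. Suc (size x))"
    using z by (intro member_le_sum) auto
  finally show ?thesis by (simp add: size_fset_overloaded_simps)
qed

lemma size_ropt: "z |\<in>| B \<Longrightarrow> size z < size (Game A B)"
proof -
  assume z: "z |\<in>| B"
  have "size z < Suc (size z)" by simp
  also have "Suc (size z) \<le> (\<Sum>x\<in>fset B. Suc (size x))"
    using z by (intro member_le_sum) auto
  finally show ?thesis by (simp add: size_fset_overloaded_simps)
qed

lemma size_opt_aux: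
  "(z::game) |\<in>| A \<or> z |\<in>| B \<Longrightarrow>
   size z < Suc ((\<Sum>x\<in>fset A. Suc (size x)) + (\<Sum>x\<in>fset B. Suc (size x)))"
  using size_lopt[of z A B] size_ropt[of z B A] by (auto simp: size_fset_overloaded_simps)

function gsum :: "game \<Rightarrow> game \<Rightarrow> game" where
  "gsum (Game GL GR) (Game HL HR) =
     Game ((\<lambda>x. gsum x (Game HL HR)) |`| GL |\<union>| (\<lambda>y. gsum (Game GL GR) y) |`| HL)
          ((\<lambda>x. gsum x (Game HL HR)) |`| GR |\<union>| (\<lambda>y. gsum (Game GL GR) y) |`| HR)"
  by pat_completeness auto
termination
  by (relation "measure (\<lambda>(g,h). size g + size h)")
     (auto intro: size_opt_aux)

function gconj :: "game \<Rightarrow> game" where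
  "gconj (Game GL GR) = Game (gconj |`| GR) (gconj |`| GL)"
  by pat_completeness auto
termination
  by (relation "measure size") (auto intro: size_opt_aux)

text \<open>Misere play: \<open>wins_first True G\<close> means Left wins moving first in G,
  \<open>wins_first False G\<close> means Right wins moving first in G.
  A player who has no move on their turn wins.\<close>
function wins_first :: "bool \<Rightarrow> game \<Rightarrow> bool" where
  "wins_first True (Game GL GR) = (GL = {||} \<or> (\<exists>x\<in>fset GL. \<not> wins_first False x))"
| "wins_first False (Game GL GR) = (GR = {||} \<or> (\<exists>y\<in>fset GR. \<not> wins_first True y))"
  by pat_completeness auto
termination
  by (relation "measure (size \<circ> snd)") (auto intro: size_opt_aux)

datatype outcome = OL | ON | OP | OR

definition misere_outcome :: "game \<Rightarrow> outcome" where
  "misere_outcome G =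
     (if wins_first True G then (if wins_first False G then ON else OL)
      else (if wins_first False G then OR else OP))"

definition universe :: "game set \<Rightarrow> bool" where
  "universe U \<longleftrightarrow>
     (\<forall>G\<in>U. fset (lopts G) \<subseteq> U \<and> fset (ropts G) \<subseteq> U) \<and>
     (\<forall>G\<in>U. \<forall>H\<in>U. gsum G H \<in> U) \<and>
     (\<forall>G\<in>U. gconj G \<in> U) \<and>
     (\<forall>A B. A \<noteq> {||} \<and> B \<noteq> {||} \<and> fset A \<subseteq> U \<and> fset B \<subseteq> U \<longrightarrow> Game A B \<in> U)"

definition univ_closure :: "game set \<Rightarrow> game set" where
  "univ_closure A = \<Inter>{U. universe U \<and> A \<subseteq> U}"

definition misere_equiv :: "game set \<Rightarrow> game \<Rightarrow> game \<Rightarrow> bool" where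
  "misere_equiv U G H \<longleftrightarrow> (\<forall>X\<in>U. misere_outcome (gsum G X) = misere_outcome (gsum H X))"

end

theory Submission
  imports Defs
begin

definition gG :: game where "gG = Game {||} {|star_game|}"

lemma lopts_gsum: "lopts (gsum A B) = (\<lambda>x. gsum x B) |`| lopts A |\<union>| (gsum A) |`| lopts B"
  by (cases A; cases B) simp

lemma ropts_gsum: "ropts (gsum A B) = (\<lambda>x. gsum x B) |`| ropts A |\<union>| (gsum A) |`| ropts B"
  by (cases A; cases B) simp

lemma lopts_gconj: "lopts (gconj A) = gconj |`| ropts A"
  by (cases A) simp

lemma ropts_gconj: "ropts (gconj A) = gconj |`| lopts A"
  by (cases A) simp

lemma gsum_zero: "gsum zero_game X = X"
proof (induction X)
  case (Game L R)
  have "gsum zero_game |`| L = L"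
    using Game(1) by (simp add: fset.map_ident_strong)
  moreover have "gsum zero_game |`| R = R"
    using Game(2) by (simp add: fset.map_ident_strong)
  ultimately show ?case unfolding zero_game_def by simp
qed

inductive ST :: "game \<Rightarrow> bool \<Rightarrow> bool" where
  st_zero: "ST zero_game False"
| st_star: "ST star_game True"
| st_G: "ST gG False"
| st_sum: "ST Y p \<Longrightarrow> ST Z q \<Longrightarrow> ST (gsum Y Z) (p \<noteq> q)"
| st_conj: "ST Y p \<Longrightarrow> ST (gconj Y) p"

lemma st_zero': "ST (Game {||} {||}) False"
  using st_zero by (simp add: zero_game_def)

lemma ST_props:
  assumes "ST Y p"
  shows "(\<forall>z. z |\<in>| lopts Y \<or> z |\<in>| ropts Y \<longrightarrow> ST z (\<not> p))
    \<and> (lopts Y = {||} \<longrightarrow> \<not> p) \<and> (ropts Y = {||} \<longrightarrow> \<not> p)"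
  using assms
proof (induction rule: ST.induct)
  case st_zero
  then show ?case by (simp add: zero_game_def)

next
  case st_star
  then show ?case by (simp add: star_game_def zero_game_def st_zero')
next
  case st_G
  then show ?case by (simp add: gG_def st_star)
next
  case (st_sum Y p Z q)
  show ?case
  proof (intro conjI allI impI)
    fix z assume "z |\<in>| lopts (gsum Y Z) \<or> z |\<in>| ropts (gsum Y Z)"
    then obtain y' z' where "z = gsum y' Z \<and> ST y' (\<not> p) \<or> z = gsum Y z' \<and> ST z' (\<not> q)"
      using st_sum by (auto simp: lopts_gsum ropts_gsum)
    then show "ST z (\<not> (p \<noteq> q))"
      using st_sum ST.st_sum[of y' "\<not> p" Z q] ST.st_sum[of Y p z' "\<not> q"] by auto
  next
    assume "lopts (gsum Y Z) = {||}"
    then show "\<not> (p \<noteq> q)" using st_sum by (simp add: lopts_gsum)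
  next
    assume "ropts (gsum Y Z) = {||}"
    then show "\<not> (p \<noteq> q)" using st_sum by (simp add: ropts_gsum)
  qed
next
  case (st_conj Y p)
  then show ?case by (auto simp: lopts_gconj ropts_gconj intro: ST.st_conj)
qed

lemma ST_wins:
  "ST Y p \<Longrightarrow> wins_first True Y = (\<not> p) \<and> wins_first False Y = (\<not> p)"
proof (induction Y arbitrary: p)
  case (Game L R)
  have P: "\<forall>z. z |\<in>| L \<or> z |\<in>| R \<longrightarrow> ST z (\<not> p)" "L = {||} \<longrightarrow> \<not> p" "R = {||} \<longrightarrow> \<not> p"
    using ST_props[OF Game(3)] by auto
  have L: "x \<in> fset L \<Longrightarrow> wins_first False x = p" for x
    using Game(1)[of x "\<not> p"] P(1) by auto
  have R: "x \<in> fset R \<Longrightarrow> wins_first True x = p" for x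
    using Game(2)[of x "\<not> p"] P(1) by auto
  show ?case
  proof (cases p)
    case True
    then have "L \<noteq> {||}" "R \<noteq> {||}" using P by auto
    then show ?thesis using L R True by auto
  next
    case False
    have "wins_first True (Game L R)"
      using L False by (cases "L = {||}") auto
    moreover have "wins_first False (Game L R)"
      using R False by (cases "R = {||}") auto
    ultimately show ?thesis using False by simp
  qed
qed

inductive good :: "game \<Rightarrow> bool" where
  good_intro: "(lopts X = {||} \<or> ropts X = {||} \<Longrightarrow> ST X False) \<Longrightarrow>
     (\<forall>x\<in>fset (lopts X). good x) \<Longrightarrow> (\<forall>x\<in>fset (ropts X). good x) \<Longrightarrow> good X"

lemma good_sum: "good A \<Longrightarrow> good B \<Longrightarrow> good (gsum A B)"
proof (induction A arbitrary: B rule: good.induct)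
  case (good_intro A)
  note H1 = good_intro.hyps
  note I1 = good_intro.IH
  from good_intro.prems show ?case
  proof (induction B rule: good.induct)
    case (good_intro B)
    note H2 = good_intro.hyps
    note I2 = good_intro.IH
    have gB: "good B"
      by (rule good.good_intro) (use H2 I2 in blast)+
    show ?case
    proof (rule good.good_intro)
      assume "lopts (gsum A B) = {||} \<or> ropts (gsum A B) = {||}"
      then have "(lopts A = {||} \<and> lopts B = {||}) \<or> (ropts A = {||} \<and> ropts B = {||})"
        by (auto simp: lopts_gsum ropts_gsum)
      then have "ST A False" "ST B False" using H1(1) H2(1) by auto
      from ST.st_sum[OF this] show "ST (gsum A B) False" by simp
    next
      show "\<forall>x\<in>fset (lopts (gsum A B)). good x"
      proof
        fix x assume "x \<in> fset (lopts (gsum A B))"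
        then consider (a) y where "y |\<in>| lopts A" "x = gsum y B"
          | (b) y where "y |\<in>| lopts B" "x = gsum A y"
          by (auto simp: lopts_gsum)
        then show "good x"
        proof cases
          case a
          then show ?thesis using I1 gB by blast
        next
          case b
          then show ?thesis using I2 by blast
        qed
      qed
    next
      show "\<forall>x\<in>fset (ropts (gsum A B)). good x"
      proof
        fix x assume "x \<in> fset (ropts (gsum A B))"
        then consider (a) y where "y |\<in>| ropts A" "x = gsum y B"
          | (b) y where "y |\<in>| ropts B" "x = gsum A y"
          by (auto simp: ropts_gsum)
        then show "good x"
        proof cases
          case a
          then show ?thesis using I1 gB by blast
        next
          case b
          then show ?thesis using I2 by blast
        qed
      qed
    qed
  qed
qed

lemma good_conj: "good A \<Longrightarrow> good (gconj A)"
proof (induction rule: good.induct)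
  case (good_intro X)
  show ?case
  proof (rule good.good_intro)
    assume "lopts (gconj X) = {||} \<or> ropts (gconj X) = {||}"
    then have "ST X False" using good_intro(1) by (auto simp: lopts_gconj ropts_gconj)
    then show "ST (gconj X) False" by (rule ST.st_conj)
  qed (use good_intro in \<open>auto simp: lopts_gconj ropts_gconj\<close>)
qed

lemma good_opts: "good X \<Longrightarrow> x |\<in>| lopts X \<or> x |\<in>| ropts X \<Longrightarrow> good x"
  by (auto elim: good.cases)

lemma good_G: "good gG"
proof -
  have z: "good zero_game" by (rule good.good_intro) (auto simp: zero_game_def st_zero')
  have s: "good star_game" by (rule good.good_intro) (use z in \<open>auto simp: star_game_def\<close>)
  show ?thesis by (rule good.good_intro) (use s st_G in \<open>auto simp: gG_def\<close>)
qed

lemma universe_good: "universe {X. good X}"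
  unfolding universe_def
proof (intro conjI ballI allI impI)
  fix A B assume h: "A \<noteq> {||} \<and> B \<noteq> {||} \<and> fset A \<subseteq> {X. good X} \<and> fset B \<subseteq> {X. good X}"
  show "Game A B \<in> {X. good X}" unfolding mem_Collect_eq
  proof (rule good.good_intro)
    show "lopts (Game A B) = {||} \<or> ropts (Game A B) = {||} \<Longrightarrow> ST (Game A B) False" using h by simp
    show "\<forall>x\<in>fset (lopts (Game A B)). good x" using h by auto
    show "\<forall>x\<in>fset (ropts (Game A B)). good x" using h by auto
  qed
next
  fix G assume "G \<in> {X. good X}"
  then show "fset (lopts G) \<subseteq> {X. good X}" "fset (ropts G) \<subseteq> {X. good X}"
    using good_opts by auto
next
  fix G H assume "G \<in> {X. good X}" "H \<in> {X. good X}"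
  then show "gsum G H \<in> {X. good X}" using good_sum by simp
next
  fix G assume "G \<in> {X. good X}"
  then show "gconj G \<in> {X. good X}" using good_conj by simp
qed

lemma closure_good: "X \<in> univ_closure {gG} \<Longrightarrow> good X"
  using universe_good good_G unfolding univ_closure_def by blast


lemma main_wins: "good X \<Longrightarrow> wins_first b (gsum gG X) = wins_first b X"
proof (induction X arbitrary: b rule: good.induct)
  case (good_intro X)
  obtain XL XR where X: "X = Game XL XR" by (cases X)
  have eq: "gsum gG X = Game (gsum gG |`| XL) (finsert (gsum star_game X) (gsum gG |`| XR))"
    by (simp add: X gG_def)
  have IL: "x \<in> fset XL \<Longrightarrow> wins_first c (gsum gG x) = wins_first c x" for x c
    using good_intro.IH X by auto
  have IR: "x \<in> fset XR \<Longrightarrow> wins_first c (gsum gG x) = wins_first c x" for x c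
    using good_intro.IH X by auto
  have A: "XR = {||} \<Longrightarrow> \<not> wins_first True (gsum star_game X)"
  proof -
    assume "XR = {||}"
    then have "ST X False" using good_intro.hyps(1) X by auto
    from ST.st_sum[OF st_star this] ST_wins show ?thesis by fastforce
  qed
  have B: "\<not> wins_first False X \<Longrightarrow> wins_first True (gsum star_game X)"
  proof -
    assume h: "\<not> wins_first False X"
    have "gsum star_game X = Game (finsert (gsum zero_game X) ((gsum star_game) |`| XL))
        (finsert (gsum zero_game X) ((gsum star_game) |`| XR))"
      by (simp add: X star_game_def)
    then show ?thesis using h by (simp add: gsum_zero)
  qed
  show ?case
  proof (cases b)
    case True
    have "wins_first True (gsum gG X) = (XL = {||} \<or> (\<exists>x\<in>fset XL. \<not> wins_first False x))"
      unfolding eq using IL by auto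
    also have "\<dots> = wins_first True X" by (simp add: X)
    finally show ?thesis using True by simp
  next
    case False
    have "wins_first False (gsum gG X) =
      (\<not> wins_first True (gsum star_game X) \<or> (\<exists>y\<in>fset XR. \<not> wins_first True y))"
      using IR by (simp add: eq)
    also have "\<dots> = wins_first False X"
      using A B by (auto simp: X)
    finally show ?thesis using False by simp
  qed
qed

theorem mainTheorem17:
  fixes G :: game
  assumes "G = Game {||} {|star_game|}"
  shows "misere_equiv (univ_closure {G}) G zero_game"
proof -
  have G: "G = gG" using assms gG_def by simp
  show ?thesis
    unfolding misere_equiv_def misere_outcome_def G gsum_zero
    using main_wins closure_good by simp
qed

end
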